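(* For every $n\geq 0$, $$\sum_{m=0}^{2^{n}-1}x^{e(2m+1)}=H_{n+1}(x)-xH_n(x),$$ and consequently, for all integers $i,n\geq 0$ (with $e(-1,n):=0$), $$|\{m\in[0,2^{n}-1]\cap\mathbb{Z}:\;e(2m+1)=i\}|=e(i,n+1)-e(i-1,n).$$
   Context: The Stern polynomials $B_n(t)\in\mathbb{Z}[t]$ are defined by $B_0(t)=0$, $B_1(t)=1$, and for $n\geq 1$: $B_{2n}(t)=tB_n(t)$, $B_{2n+1}(t)=B_n(t)+B_{n+1}(t)$. For $n\geq1$ let $e(n)=\deg B_n(t)$. For $n\geq 0$ let $H_n(x)=\sum_{m=1}^{2^n}x^{e(m)}$, and for $i,n\geq 0$ let $e(i,n)=|\{m\in[1,2^n]\cap\mathbb{Z}:\;e(m)=i\}|$. *)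

theory Defs
  imports "HOL-Computational_Algebra.Polynomial"
begin

function stern_poly :: "nat \<Rightarrow> int poly" where
  "stern_poly n =
     (if n = 0 then 0
      else if n = 1 then 1
      else if even n then [:0, 1:] * stern_poly (n div 2)
      else stern_poly (n div 2) + stern_poly (n div 2 + 1))"
  by auto
termination
  by (relation "measure id") (auto elim!: oddE)

definition stern_e :: "nat \<Rightarrow> nat" where
  "stern_e n = degree (stern_poly n)"

definition stern_H :: "nat \<Rightarrow> 'a::comm_ring_1 \<Rightarrow> 'a" where
  "stern_H n x = (\<Sum>m = 1..2^n. x ^ stern_e m)"

definition stern_cnt :: "nat \<Rightarrow> nat \<Rightarrow> nat" where
  "stern_cnt i n = card {m \<in> {1..2^n}. stern_e m = i}"

end

theory Submission
  imports Defs
begin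

declare stern_poly.simps[simp del]

lemma stern_pos: "k \<ge> 1 \<Longrightarrow> poly (stern_poly k) 1 > 0"
proof (induction k rule: less_induct)
  case (less k)
  show ?case
  proof (cases "k = 1")
    case True then show ?thesis by (simp add: stern_poly.simps)
  next
    case False
    show ?thesis
    proof (cases "even k")
      case True
      then have "poly (stern_poly k) 1 = poly (stern_poly (k div 2)) 1"
        using False less.prems by (subst stern_poly.simps) simp
      moreover have "poly (stern_poly (k div 2)) 1 > 0"
        using less.IH[of "k div 2"] less.prems False True by auto
      ultimately show ?thesis by simp
    next
      case odd: False
      then have "poly (stern_poly k) 1 = poly (stern_poly (k div 2)) 1 + poly (stern_poly (k div 2 + 1)) 1"
        using False less.prems by (subst stern_poly.simps) simp
      moreover have "poly (stern_poly (k div 2)) 1 > 0"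
        using less.IH[of "k div 2"] less.prems False odd by (auto elim!: oddE)
      moreover have "poly (stern_poly (k div 2 + 1)) 1 > 0"
        using less.IH[of "k div 2 + 1"] less.prems False odd by (auto elim!: oddE)
      ultimately show ?thesis by simp
    qed
  qed
qed

lemma stern_nz: "k \<ge> 1 \<Longrightarrow> stern_poly k \<noteq> 0"
  using stern_pos by fastforce

lemma e2: "k \<ge> 1 \<Longrightarrow> stern_e (2*k) = stern_e k + 1"
proof -
  assume k: "k \<ge> 1"
  have "stern_poly (2*k) = [:0,1:] * stern_poly k"
    using k by (subst stern_poly.simps) simp
  then show ?thesis unfolding stern_e_def using stern_nz[OF k]
    by (simp add: degree_mult_eq)
qed

lemma split_set: "{1..(2::nat)^(n+1)} = (\<lambda>k. 2*k) ` {1..2^n} \<union> (\<lambda>k. 2*k+1) ` {0..2^n-1}"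
proof (rule set_eqI, rule iffI)
  fix m assume m: "m \<in> {1..(2::nat)^(n+1)}"
  have p: "(2::nat)^n \<ge> 1" by simp
  show "m \<in> (\<lambda>k. 2*k) ` {1..2^n} \<union> (\<lambda>k. 2*k+1) ` {0..2^n-1}"
  proof (cases "even m")
    case True
    then obtain k where "m = 2*k" by blast
    then show ?thesis using m by auto
  next
    case False
    then obtain k where "m = 2*k+1" by (blast elim: oddE)
    moreover have "k \<le> 2^n - 1" using m \<open>m = 2*k+1\<close> by auto
    ultimately show ?thesis by auto
  qed
next
  fix m assume "m \<in> (\<lambda>k. 2*k) ` {1..(2::nat)^n} \<union> (\<lambda>k. 2*k+1) ` {0..2^n-1}"
  moreover have "(2::nat)^n \<ge> 1" by simp
  ultimately show "m \<in> {1..(2::nat)^(n+1)}" by (auto simp: le_diff_conv2)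
qed

lemma disj: "(\<lambda>k. 2*k) ` A \<inter> (\<lambda>k::nat. 2*k+1) ` B = {}"
  by auto presburger

lemma part1: "(\<Sum>m = 0..2^n - 1. (x::'a::comm_ring_1) ^ stern_e (2*m+1)) = stern_H (n+1) x - x * stern_H n x"
proof -
  have "stern_H (n+1) x = (\<Sum>m\<in>(\<lambda>k. 2*k) ` {1..2^n}. x ^ stern_e m) + (\<Sum>m\<in>(\<lambda>k. 2*k+1) ` {0..2^n-1}. x ^ stern_e m)"
    unfolding stern_H_def split_set apply (rule sum.union_disjoint) apply simp apply simp by (rule disj)
  also have "(\<Sum>m\<in>(\<lambda>k. 2*k) ` {1..2^n}. x ^ stern_e m) = (\<Sum>k\<in>{1..2^n}. x ^ stern_e (2*k))"
    by (subst sum.reindex) (auto simp: inj_on_def)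
  also have "\<dots> = x * stern_H n x"
    unfolding stern_H_def sum_distrib_left by (rule sum.cong) (auto simp: e2)
  also have "(\<Sum>m\<in>(\<lambda>k. 2*k+1) ` {0..2^n-1}. x ^ stern_e m) = (\<Sum>k=0..2^n-1. x ^ stern_e (2*k+1))"
    by (subst sum.reindex) (auto simp: inj_on_def)
  finally show ?thesis by simp
qed

lemma part2: "int (card {m \<in> {0..2^n - 1}. stern_e (2*m+1) = i})
              = int (stern_cnt i (n+1)) - (if i = 0 then 0 else int (stern_cnt (i-1) n))"
proof -
  have S: "{m \<in> {1..2^(n+1)}. stern_e m = i} =
     (\<lambda>k. 2*k) ` {k\<in>{1..2^n}. stern_e (2*k) = i} \<union> (\<lambda>k. 2*k+1) ` {k\<in>{0..2^n-1}. stern_e (2*k+1) = i}"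
    unfolding split_set by auto
  have c: "stern_cnt i (n+1) = card {k\<in>{1..(2::nat)^n}. stern_e (2*k) = i} + card {k\<in>{0..(2::nat)^n-1}. stern_e (2*k+1) = i}"
    unfolding stern_cnt_def S
    apply (subst card_Un_disjoint) apply simp apply simp apply (rule disj) by (simp add: card_image inj_on_def)
  have E: "{k\<in>{1..(2::nat)^n}. stern_e (2*k) = i} = (if i = 0 then {} else {k\<in>{1..2^n}. stern_e k = i - 1})"
    using e2 by auto
  show ?thesis using c E unfolding stern_cnt_def by auto
qed

theorem mainTheorem4:
  shows "(\<forall>(n::nat) (x::'a::comm_ring_1).
            (\<Sum>m = 0..2^n - 1. x ^ stern_e (2*m+1)) = stern_H (n+1) x - x * stern_H n x)
       \<and> (\<forall>(i::nat) (n::nat).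
            int (card {m \<in> {0..2^n - 1}. stern_e (2*m+1) = i})
              = int (stern_cnt i (n+1)) - (if i = 0 then 0 else int (stern_cnt (i-1) n)))"
  using part1 part2 by blast

end
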